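(* Let $V\in C^\infty(\mathbb{R}^n)$ with $\alpha_0>-\infty$, let $a\in\mathbb{R}$ satisfy $a+\alpha_0>\frac{\nu^2}4$, and let $P(x):=\begin{pmatrix}2I&\nu I\\\nu I&2\frac{\partial^2V}{\partial x^2}(x)+2aI\end{pmatrix}$. Then for all $x\in\mathbb{R}^n$ $$c_1P(x)\le\begin{pmatrix}I&0\\0&\frac{\partial^2V}{\partial x^2}(x)+(1-\alpha_0)I\end{pmatrix}\le c_2P(x),$$ with $c_1:=\dfrac{1}{a+\alpha_0+1+\sqrt{(a+\alpha_0-1)^2+\nu^2}}>0$ and $c_2:=\dfrac{a+\alpha_0+1+\sqrt{(a+\alpha_0-1)^2+\nu^2}}{4(a+\alpha_0)-\nu^2}>0$.
   Context: $\nu>0$ is a constant and $I$ the $n\times n$ identity. $\alpha(x)$ is the smallest eigenvalue of $\frac{\partial^2V}{\partial x^2}(x)$ and $\alpha_0:=\inf_{x\in\mathbb{R}^n}\alpha(x)$. For symmetric matrices, $A\ge B$ means $A-B$ is positive semi-definite. *)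

theory Defs
  imports "HOL-Analysis.Analysis"
begin

definition partial :: "'n::finite \<Rightarrow> (real^'n \<Rightarrow> real) \<Rightarrow> real^'n \<Rightarrow> real" where
  "partial i f x = deriv (\<lambda>t. f (x + t *\<^sub>R axis i 1)) 0"

fun iter_partial :: "'n::finite list \<Rightarrow> (real^'n \<Rightarrow> real) \<Rightarrow> real^'n \<Rightarrow> real" where
  "iter_partial [] f = f"
| "iter_partial (i # is) f = partial i (iter_partial is f)"

definition smooth :: "(real^'n::finite \<Rightarrow> real) \<Rightarrow> bool" where
  "smooth f \<longleftrightarrow> (\<forall>is x. iter_partial is f differentiable (at x))"

definition hessian :: "(real^'n::finite \<Rightarrow> real) \<Rightarrow> real^'n \<Rightarrow> real^'n^'n" where
  "hessian f x = (\<chi> i j. iter_partial [i, j] f x)"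

definition is_eigenvalue :: "real^'n::finite^'n \<Rightarrow> real \<Rightarrow> bool" where
  "is_eigenvalue A l \<longleftrightarrow> (\<exists>v. v \<noteq> 0 \<and> A *v v = l *\<^sub>R v)"

definition min_eigenvalue :: "real^'n::finite^'n \<Rightarrow> real" where
  "min_eigenvalue A = Inf {l. is_eigenvalue A l}"

definition psd :: "real^'m::finite^'m \<Rightarrow> bool" where
  "psd M \<longleftrightarrow> (\<forall>z. 0 \<le> z \<bullet> (M *v z))"

definition loewner_le :: "real^'m::finite^'m \<Rightarrow> real^'m^'m \<Rightarrow> bool" where
  "loewner_le A B \<longleftrightarrow> psd (B - A)"

text \<open>2x2 block matrix [[A, B], [C, D]] indexed by 'n + 'n (first block = Inl).\<close>
definition block2 :: "real^'n::finite^'n \<Rightarrow> real^'n^'n \<Rightarrow> real^'n^'n \<Rightarrow> real^'n^'n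
    \<Rightarrow> real^('n + 'n)^('n + 'n)" where
  "block2 A B C D = (\<chi> p q. case (p, q) of
      (Inl i, Inl j) \<Rightarrow> A $ i $ j | (Inl i, Inr j) \<Rightarrow> B $ i $ j
    | (Inr i, Inl j) \<Rightarrow> C $ i $ j | (Inr i, Inr j) \<Rightarrow> D $ i $ j)"

end

theory Submission
  imports Defs
begin

lemma sum_UNIV_plus:
  "(\<Sum>p\<in>(UNIV::('a::finite+'b::finite) set). f p) = (\<Sum>i\<in>UNIV. f (Inl i)) + (\<Sum>j\<in>UNIV. f (Inr j))"
  by (subst UNIV_Plus_UNIV[symmetric], subst sum.Plus) (auto simp: comp_def)

lemma block_quad:
  fixes z :: "real^('n::finite+'n)"
  shows "z \<bullet> (block2 A B C D *v z) =
    (\<chi> i. z$Inl i) \<bullet> (A *v (\<chi> i. z$Inl i)) + (\<chi> i. z$Inl i) \<bullet> (B *v (\<chi> i. z$Inr i))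
  + (\<chi> i. z$Inr i) \<bullet> (C *v (\<chi> i. z$Inl i)) + (\<chi> i. z$Inr i) \<bullet> (D *v (\<chi> i. z$Inr i))"
  by (simp add: inner_vec_def matrix_vector_mult_def block2_def sum_UNIV_plus
      sum_distrib_left sum.distrib algebra_simps)

lemma block2_scale: "c *\<^sub>R block2 A B C D = block2 (c *\<^sub>R A) (c *\<^sub>R B) (c *\<^sub>R C) (c *\<^sub>R D)"
  by (simp add: block2_def vec_eq_iff split: sum.split)

lemma block2_diff: "block2 A B C D - block2 A' B' C' D' = block2 (A - A') (B - B') (C - C') (D - D')"
  by (simp add: block2_def vec_eq_iff split: sum.split)

lemma sym_inner:
  fixes M :: "real^'n::finite^'n"
  assumes "\<And>i j. M$i$j = M$j$i"
  shows "x \<bullet> (M *v y) = y \<bullet> (M *v x)"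
proof -
  have "x \<bullet> (M *v y) = (\<Sum>i\<in>UNIV. \<Sum>j\<in>UNIV. x$i * M$i$j * y$j)"
    by (simp add: inner_vec_def matrix_vector_mult_def sum_distrib_left algebra_simps)
  also have "\<dots> = (\<Sum>j\<in>UNIV. \<Sum>i\<in>UNIV. x$i * M$i$j * y$j)" by (rule sum.swap)
  also have "\<dots> = y \<bullet> (M *v x)"
    by (simp add: inner_vec_def matrix_vector_mult_def sum_distrib_left algebra_simps assms)
  finally show ?thesis .
qed

lemma quad_coeff_zero:
  fixes b c :: real
  assumes "c \<ge> 0" and "\<And>t. 0 \<le> 2*t*b + t^2*c"
  shows "b = 0"
proof (rule ccontr)
  assume "b \<noteq> 0"
  define t where "t = -b/(c+1)"
  have ct: "(c+1)*t = -b" using assms(1) by (simp add: t_def)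
  have "0 \<le> 2*t*b + t^2*c" by (rule assms(2))
  hence "0 \<le> (2*t*b + t^2*c) * (c+1)^2" using assms(1) by simp
  also have "\<dots> = 2*b*(c+1)*((c+1)*t) + c*((c+1)*t)^2" by (simp add: algebra_simps power2_eq_square)
  also have "\<dots> = b^2 * (-c-2)" unfolding ct by (simp add: algebra_simps power2_eq_square)
  also have "\<dots> < 0" using \<open>b \<noteq> 0\<close> assms(1) by (simp add: mult_pos_neg)
  finally show False by simp
qed

lemma min_eig_bound:
  fixes H :: "real^'n::finite^'n"
  assumes sym: "\<And>i j. H$i$j = H$j$i"
  shows "min_eigenvalue H * (z \<bullet> z) \<le> z \<bullet> (H *v z)"
proof -
  define q where "q = (\<lambda>z. z \<bullet> (H *v z))"
  define S where "S = {z::real^'n. norm z = 1}"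
  have "S = sphere (0::real^'n) 1" unfolding S_def sphere_def by (simp add: dist_norm)
  hence cS: "compact S" by (simp only: compact_sphere)
  have neS: "S \<noteq> {}" unfolding S_def using norm_axis_1 by blast
  have "continuous_on S (\<lambda>z. H *v z)"
    by (intro linear_continuous_on matrix_vector_mul_bounded_linear)
  hence cq: "continuous_on S q" unfolding q_def by (intro continuous_on_inner continuous_on_id)
  obtain v where vS: "v \<in> S" and vmin: "\<And>y. y \<in> S \<Longrightarrow> q v \<le> q y"
    using continuous_attains_inf[OF cS neS cq] by blast
  define \<mu> where "\<mu> = q v"
  have qscale: "q (c *\<^sub>R y) = c^2 * q y" for c y
    by (simp add: q_def power2_eq_square matrix_vector_mult_scaleR)
  have lb: "\<mu> * (y \<bullet> y) \<le> q y" for y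
  proof (cases "y = 0")
    case True then show ?thesis by (simp add: q_def)
  next
    case False
    hence n: "norm y > 0" by simp
    have "(inverse (norm y) *\<^sub>R y) \<in> S" using n by (simp add: S_def)
    hence "\<mu> \<le> q (inverse (norm y) *\<^sub>R y)" using vmin \<mu>_def by blast
    also have "\<dots> = q y / (norm y)^2" by (simp add: qscale power_inverse divide_inverse)
    finally have "\<mu> * (norm y)^2 \<le> q y" using n by (simp add: field_simps)
    then show ?thesis by (simp add: power2_norm_eq_inner)
  qed
  define A where "A = H - \<mu> *\<^sub>R mat 1"
  have qA: "y \<bullet> (A *v y) = q y - \<mu> * (y \<bullet> y)" for y
    by (simp add: A_def q_def matrix_vector_mult_diff_rdistrib scaleR_matrix_vector_assoc[symmetric] inner_diff_right)
  have symA: "\<And>i j. A$i$j = A$j$i" by (simp add: A_def sym mat_def)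
  have Av0: "A *v v = 0"
  proof -
    have "w \<bullet> (A *v v) = 0" for w
    proof (rule quad_coeff_zero)
      show "0 \<le> w \<bullet> (A *v w)" using lb[of w] qA[of w] by simp
      fix t
      have vv: "v \<bullet> v = 1" using vS unfolding S_def by (simp add: norm_eq_1)
      have a0: "v \<bullet> (A *v v) = 0" using qA[of v] vv unfolding \<mu>_def by simp
      have bc: "v \<bullet> (A *v w) = w \<bullet> (A *v v)" by (rule sym_inner[OF symA])
      have X: "0 \<le> (v + t *\<^sub>R w) \<bullet> (A *v (v + t *\<^sub>R w))"
        using lb[of "v + t *\<^sub>R w"] qA[of "v + t *\<^sub>R w"] by simp
      have "(v + t *\<^sub>R w) \<bullet> (A *v (v + t *\<^sub>R w)) = v \<bullet> (A *v v) + t * (v \<bullet> (A *v w)) + t * (w \<bullet> (A *v v)) + t^2 * (w \<bullet> (A *v w))"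
        by (simp add: matrix_vector_right_distrib matrix_vector_mult_scaleR inner_add_left inner_add_right power2_eq_square algebra_simps)
      also have "\<dots> = 2 * t * (w \<bullet> (A *v v)) + t^2 * (w \<bullet> (A *v w))"
        unfolding a0 bc by simp
      finally show "0 \<le> 2 * t * (w \<bullet> (A *v v)) + t^2 * (w \<bullet> (A *v w))" using X by simp
    qed
    from this[of "A *v v"] show ?thesis by simp
  qed
  have eig: "is_eigenvalue H \<mu>"
    unfolding is_eigenvalue_def
  proof (intro exI conjI)
    show "v \<noteq> 0" using vS S_def by auto
    show "H *v v = \<mu> *\<^sub>R v" using Av0
      by (simp add: A_def matrix_vector_mult_diff_rdistrib scaleR_matrix_vector_assoc[symmetric])
  qed
  have low: "\<mu> \<le> l" if eigl: "is_eigenvalue H l" for l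
  proof -
    obtain u where u: "u \<noteq> 0" "H *v u = l *\<^sub>R u" using eigl unfolding is_eigenvalue_def by auto
    have "\<mu> * (u \<bullet> u) \<le> l * (u \<bullet> u)" using lb[of u] u by (simp add: q_def)
    moreover have "u \<bullet> u > 0" using u by simp
    ultimately show ?thesis by (meson mult_le_cancel_right_pos)
  qed
  have "min_eigenvalue H = \<mu>" unfolding min_eigenvalue_def
    by (rule cInf_eq_minimum) (use eig low in auto)
  then show ?thesis using lb[of z] q_def by simp
qed

lemma line_deriv:
  fixes f :: "real^'n::finite \<Rightarrow> real"
  assumes f': "(f has_derivative f') (at (y + s0 *\<^sub>R v))"
  shows "((\<lambda>s. f (y + s *\<^sub>R v)) has_real_derivative f' v) (at s0)"
proof -
  have lin: "linear f'" using f' has_derivative_linear by blast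
  have g: "((\<lambda>s. y + s *\<^sub>R v) has_derivative (\<lambda>h. h *\<^sub>R v)) (at s0)"
    by (auto intro!: derivative_eq_intros)
  have "((f \<circ> (\<lambda>s. y + s *\<^sub>R v)) has_derivative (f' \<circ> (\<lambda>h. h *\<^sub>R v))) (at s0)"
    by (rule diff_chain_at[OF g f'])
  moreover have "(f' \<circ> (\<lambda>h. h *\<^sub>R v)) = (\<lambda>h. f' v * h)"
    using linear.scaleR[OF lin] by (auto simp: comp_def)
  ultimately show ?thesis unfolding has_field_derivative_def by (simp add: comp_def)
qed

lemma partial_eq:
  fixes f :: "real^'n::finite \<Rightarrow> real"
  assumes f': "(f has_derivative f') (at z)"
  shows "partial i f z = f' (axis i 1)"
proof -
  have "((\<lambda>s. f (z + s *\<^sub>R axis i 1)) has_real_derivative f' (axis i 1)) (at 0)"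
    by (rule line_deriv) (use f' in simp)
  then show ?thesis unfolding partial_def by (rule DERIV_imp_deriv)
qed

lemma line_partial:
  fixes f :: "real^'n::finite \<Rightarrow> real"
  assumes "f differentiable (at (y + s0 *\<^sub>R axis i 1))"
  shows "((\<lambda>s. f (y + s *\<^sub>R axis i 1)) has_real_derivative partial i f (y + s0 *\<^sub>R axis i 1)) (at s0)"
proof -
  obtain f' where f': "(f has_derivative f') (at (y + s0 *\<^sub>R axis i 1))"
    using assms unfolding differentiable_def by blast
  show ?thesis using line_deriv[OF f'] partial_eq[OF f'] by simp
qed

lemma mvt_sq:
  fixes f :: "real^'n::finite \<Rightarrow> real"
  assumes d0: "\<And>y. f differentiable (at y)" and dj: "\<And>y. partial j f differentiable (at y)"
    and h: "h > 0"
  shows "\<exists>p. norm (p - x) \<le> 2*h \<and>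
     f (x + h *\<^sub>R axis i 1 + h *\<^sub>R axis j 1) - f (x + h *\<^sub>R axis i 1) - f (x + h *\<^sub>R axis j 1) + f x
       = h^2 * partial i (partial j f) p"
proof -
  let ?ei = "axis i 1 :: real^'n" and ?ej = "axis j 1 :: real^'n"
  define \<phi> where "\<phi> = (\<lambda>t. f (x + h *\<^sub>R ?ei + t *\<^sub>R ?ej) - f (x + t *\<^sub>R ?ej))"
  have "\<exists>z. 0 < z \<and> z < h \<and> \<phi> h - \<phi> 0 = (h - 0) *
      (partial j f (x + h *\<^sub>R ?ei + z *\<^sub>R ?ej) - partial j f (x + z *\<^sub>R ?ej))"
  proof (rule MVT2)
    show "0 < h" by (rule h)
    fix t :: real
    show "(\<phi> has_real_derivative
      (partial j f (x + h *\<^sub>R ?ei + t *\<^sub>R ?ej) - partial j f (x + t *\<^sub>R ?ej))) (at t)"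
      unfolding \<phi>_def by (intro DERIV_diff line_partial d0)
  qed
  then obtain \<sigma> where \<sigma>: "0 < \<sigma>" "\<sigma> < h" and eq1: "\<phi> h - \<phi> 0 = h *
      (partial j f (x + h *\<^sub>R ?ei + \<sigma> *\<^sub>R ?ej) - partial j f (x + \<sigma> *\<^sub>R ?ej))" by auto
  define \<psi> where "\<psi> = (\<lambda>s. partial j f (x + \<sigma> *\<^sub>R ?ej + s *\<^sub>R ?ei))"
  have "\<exists>z. 0 < z \<and> z < h \<and> \<psi> h - \<psi> 0 = (h - 0) * partial i (partial j f) (x + \<sigma> *\<^sub>R ?ej + z *\<^sub>R ?ei)"
  proof (rule MVT2)
    show "0 < h" by (rule h)
    fix t :: real
    show "(\<psi> has_real_derivative partial i (partial j f) (x + \<sigma> *\<^sub>R ?ej + t *\<^sub>R ?ei)) (at t)"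
      unfolding \<psi>_def by (intro line_partial dj)
  qed
  then obtain \<tau> where \<tau>: "0 < \<tau>" "\<tau> < h" and eq2: "\<psi> h - \<psi> 0 = h * partial i (partial j f) (x + \<sigma> *\<^sub>R ?ej + \<tau> *\<^sub>R ?ei)"
    by auto
  define p where "p = x + \<sigma> *\<^sub>R ?ej + \<tau> *\<^sub>R ?ei"
  have "p - x = \<sigma> *\<^sub>R ?ej + \<tau> *\<^sub>R ?ei" by (simp add: p_def)
  hence "norm (p - x) \<le> norm (\<sigma> *\<^sub>R ?ej) + norm (\<tau> *\<^sub>R ?ei)"
    by (simp only: norm_triangle_ineq)
  also have "\<dots> \<le> 2*h" using \<sigma> \<tau> by simp
  finally have np: "norm (p - x) \<le> 2*h" .
  have e1: "x + h *\<^sub>R ?ei + \<sigma> *\<^sub>R ?ej = x + \<sigma> *\<^sub>R ?ej + h *\<^sub>R ?ei" by (simp add: algebra_simps)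
  have "f (x + h *\<^sub>R ?ei + h *\<^sub>R ?ej) - f (x + h *\<^sub>R ?ei) - f (x + h *\<^sub>R ?ej) + f x = \<phi> h - \<phi> 0"
    by (simp add: \<phi>_def)
  also have "\<dots> = h * (\<psi> h - \<psi> 0)" unfolding eq1 \<psi>_def e1 by simp
  also have "\<dots> = h^2 * partial i (partial j f) p" unfolding eq2 p_def by (simp add: power2_eq_square)
  finally show ?thesis using np by blast
qed

lemma lin_contra:
  fixes t t1 t2 t3 :: real
  shows "t \<le> t1 + t2 \<Longrightarrow> t1 = t3 \<Longrightarrow> t3 < t/2 \<Longrightarrow> t2 < t/2 \<Longrightarrow> False"
  by linarith

lemma schwarz:
  fixes f :: "real^'n::finite \<Rightarrow> real"
  assumes sm: "smooth f"
  shows "iter_partial [i,j] f x = iter_partial [j,i] f x"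
proof (rule ccontr)
  have dall: "\<And>is y. iter_partial is f differentiable (at y)" using sm unfolding smooth_def by blast
  have d0: "\<And>y. f differentiable (at y)" using dall[of "[]"] by simp
  have di: "\<And>y. partial i f differentiable (at y)" using dall[of "[i]"] by simp
  have dj: "\<And>y. partial j f differentiable (at y)" using dall[of "[j]"] by simp
  define Hij where "Hij = partial i (partial j f)"
  define Hji where "Hji = partial j (partial i f)"
  have cij: "continuous (at x) Hij" unfolding Hij_def
    using dall[of "[i,j]"] by (simp add: differentiable_imp_continuous_within)
  have cji: "continuous (at x) Hji" unfolding Hji_def
    using dall[of "[j,i]"] by (simp add: differentiable_imp_continuous_within)
  assume ne: "iter_partial [i,j] f x \<noteq> iter_partial [j,i] f x"
  hence ne': "Hij x \<noteq> Hji x" by (simp add: Hij_def Hji_def)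
  define \<epsilon> where "\<epsilon> = \<bar>Hij x - Hji x\<bar> / 2"
  have \<epsilon>: "\<epsilon> > 0" using ne' by (simp add: \<epsilon>_def)
  obtain d1 where d1: "d1 > 0" "\<And>y. dist y x < d1 \<Longrightarrow> dist (Hij y) (Hij x) < \<epsilon>"
    using cij \<epsilon> unfolding continuous_at_eps_delta by blast
  obtain d2 where d2: "d2 > 0" "\<And>y. dist y x < d2 \<Longrightarrow> dist (Hji y) (Hji x) < \<epsilon>"
    using cji \<epsilon> unfolding continuous_at_eps_delta by blast
  define h where "h = min d1 d2 / 4"
  have h: "h > 0" using d1 d2 by (simp add: h_def)
  obtain p where p: "norm (p - x) \<le> 2*h" and
    ep: "f (x + h *\<^sub>R axis i 1 + h *\<^sub>R axis j 1) - f (x + h *\<^sub>R axis i 1) - f (x + h *\<^sub>R axis j 1) + f x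
       = h^2 * Hij p"
    using mvt_sq[OF d0 dj h, of x i] unfolding Hij_def by blast
  obtain q where q: "norm (q - x) \<le> 2*h" and
    eq: "f (x + h *\<^sub>R axis j 1 + h *\<^sub>R axis i 1) - f (x + h *\<^sub>R axis j 1) - f (x + h *\<^sub>R axis i 1) + f x
       = h^2 * Hji q"
    using mvt_sq[OF d0 di h, of x j] unfolding Hji_def by blast
  have "x + h *\<^sub>R axis j 1 + h *\<^sub>R axis i 1 = x + h *\<^sub>R axis i 1 + h *\<^sub>R axis j 1"
    by (simp add: algebra_simps)
  note comm = this
  have eq': "f (x + h *\<^sub>R axis i 1 + h *\<^sub>R axis j 1) - f (x + h *\<^sub>R axis j 1) - f (x + h *\<^sub>R axis i 1) + f x
       = h^2 * Hji q" using eq by (simp only: comm)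
  have "h^2 * Hij p = h^2 * Hji q" using ep eq' by linarith
  hence pq: "Hij p = Hji q" using h by simp
  have "dist p x < d1" using p h d1 d2 by (simp add: dist_norm h_def)
  hence a: "\<bar>Hij p - Hij x\<bar> < \<epsilon>" using d1 by (simp add: dist_real_def)
  have "dist q x < d2" using q h d1 d2 by (simp add: dist_norm h_def)
  hence b: "\<bar>Hji q - Hji x\<bar> < \<epsilon>" using d2 by (simp add: dist_real_def)
  have "Hij x - Hji x = (Hij x - Hij p) + (Hji q - Hji x)" using pq by simp
  hence t1: "\<bar>Hij x - Hji x\<bar> \<le> \<bar>Hij x - Hij p\<bar> + \<bar>Hji q - Hji x\<bar>"
    by (metis abs_triangle_ineq)
  have t2: "\<bar>Hij x - Hij p\<bar> = \<bar>Hij p - Hij x\<bar>" by (rule abs_minus_commute)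
  show False by (rule lin_contra[OF t1 t2 a[unfolded \<epsilon>_def] b[unfolded \<epsilon>_def]])
qed

lemma quad2:
  fixes u w :: "real^'n::finite"
  assumes p: "p \<ge> 0" and qq: "qq \<ge> 0" and sc: "sc^2 \<le> p * qq"
  shows "0 \<le> p * (u \<bullet> u) + 2 * sc * (u \<bullet> w) + qq * (w \<bullet> w)"
proof -
  define x where "x = norm u"
  define y where "y = norm w"
  have x: "x \<ge> 0" "u \<bullet> u = x^2" unfolding x_def by (rule norm_ge_zero, rule power2_norm_eq_inner[symmetric])
  have y: "y \<ge> 0" "w \<bullet> w = y^2" unfolding y_def by (rule norm_ge_zero, rule power2_norm_eq_inner[symmetric])
  have cs: "\<bar>u \<bullet> w\<bar> \<le> x * y" unfolding x_def y_def by (rule Cauchy_Schwarz_ineq2)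
  have "- (\<bar>sc\<bar> * (x * y)) \<le> sc * (u \<bullet> w)"
  proof -
    have "\<bar>sc * (u \<bullet> w)\<bar> \<le> \<bar>sc\<bar> * (x * y)" unfolding abs_mult by (rule mult_left_mono[OF cs]) simp
    thus ?thesis by linarith
  qed
  moreover have "0 \<le> p * x^2 - 2*\<bar>sc\<bar> * x * y + qq * y^2"
  proof (cases "p = 0")
    case True
    hence "sc = 0" using sc by simp
    thus ?thesis using True qq by simp
  next
    case False
    hence pp: "p > 0" using p by simp
    have "p * (p * x^2 - 2*\<bar>sc\<bar> * x * y + qq * y^2) = (p * x - \<bar>sc\<bar> * y)^2 + (p * qq - sc^2) * y^2"
      by (simp add: algebra_simps power2_eq_square)
    also have "\<dots> \<ge> 0" using sc by simp
    finally show ?thesis using pp by (simp add: zero_le_mult_iff)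
  qed
  ultimately show ?thesis using x y by (simp add: algebra_simps)
qed

lemma quad_expand:
  fixes H :: "real^'n::finite^'n" and z :: "real^('n+'n)"
  shows "z \<bullet> (block2 (p *\<^sub>R mat 1) (sc *\<^sub>R mat 1) (sc *\<^sub>R mat 1) (k *\<^sub>R H + l *\<^sub>R mat 1) *v z)
    = p * ((\<chi> i. z$Inl i) \<bullet> (\<chi> i. z$Inl i)) + 2 * sc * ((\<chi> i. z$Inl i) \<bullet> (\<chi> i. z$Inr i))
      + k * ((\<chi> i. z$Inr i) \<bullet> (H *v (\<chi> i. z$Inr i))) + l * ((\<chi> i. z$Inr i) \<bullet> (\<chi> i. z$Inr i))"
  unfolding block_quad
  by (simp add: matrix_vector_mult_add_rdistrib scaleR_matrix_vector_assoc[symmetric] inner_add_right inner_commute[of "\<chi> i. z$Inr i" "\<chi> i. z$Inl i"])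

theorem lemma6p1:
  fixes V :: "real^'n \<Rightarrow> real" and \<nu> a :: real
  defines "\<alpha> \<equiv> (\<lambda>x. min_eigenvalue (hessian V x))"
  defines "\<alpha>\<^sub>0 \<equiv> Inf (range \<alpha>)"
  defines "P \<equiv> (\<lambda>x. block2 (2 *\<^sub>R mat 1) (\<nu> *\<^sub>R mat 1) (\<nu> *\<^sub>R mat 1)
                             (2 *\<^sub>R hessian V x + (2 * a) *\<^sub>R mat 1))"
  defines "c\<^sub>1 \<equiv> 1 / (a + \<alpha>\<^sub>0 + 1 + sqrt ((a + \<alpha>\<^sub>0 - 1)\<^sup>2 + \<nu>\<^sup>2))"
  defines "c\<^sub>2 \<equiv> (a + \<alpha>\<^sub>0 + 1 + sqrt ((a + \<alpha>\<^sub>0 - 1)\<^sup>2 + \<nu>\<^sup>2)) / (4 * (a + \<alpha>\<^sub>0) - \<nu>\<^sup>2)"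
  assumes "\<nu> > 0"
    and "smooth V"
    and "bdd_below (range \<alpha>)"
    and "a + \<alpha>\<^sub>0 > \<nu>\<^sup>2 / 4"
  shows "c\<^sub>1 > 0 \<and> c\<^sub>2 > 0 \<and>
    (\<forall>x. loewner_le (c\<^sub>1 *\<^sub>R P x) (block2 (mat 1) 0 0 (hessian V x + (1 - \<alpha>\<^sub>0) *\<^sub>R mat 1))
       \<and> loewner_le (block2 (mat 1) 0 0 (hessian V x + (1 - \<alpha>\<^sub>0) *\<^sub>R mat 1)) (c\<^sub>2 *\<^sub>R P x))"
proof -
  have symH: "\<And>x i j. hessian V x $ i $ j = hessian V x $ j $ i"
    using schwarz[OF \<open>smooth V\<close>] by (simp add: hessian_def)
  have Hlb: "\<alpha>\<^sub>0 * (z \<bullet> z) \<le> z \<bullet> (hessian V x *v z)" for x z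
  proof -
    have "\<alpha> x * (z \<bullet> z) \<le> z \<bullet> (hessian V x *v z)"
      unfolding \<alpha>_def by (rule min_eig_bound) (rule symH)
    moreover have "\<alpha>\<^sub>0 \<le> \<alpha> x" unfolding \<alpha>\<^sub>0_def
      by (rule cInf_lower[OF rangeI \<open>bdd_below (range \<alpha>)\<close>])
    moreover have "z \<bullet> z \<ge> 0" by simp
    ultimately show ?thesis by (meson mult_right_mono order_trans)
  qed
  define b where "b = a + \<alpha>\<^sub>0"
  define r where "r = sqrt ((b - 1)\<^sup>2 + \<nu>\<^sup>2)"
  define L where "L = b + 1 + r"
  define m where "m = b + 1 - r"
  have hb: "b > \<nu>\<^sup>2 / 4" using \<open>a + \<alpha>\<^sub>0 > \<nu>\<^sup>2 / 4\<close> by (simp add: b_def)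
  have bpos: "b > 0" using hb zero_le_power2[of \<nu>] by linarith
  have r2: "r^2 = (b - 1)\<^sup>2 + \<nu>\<^sup>2" unfolding r_def by simp
  have rge: "\<bar>b - 1\<bar> \<le> r" unfolding r_def
    by (metis abs_ge_zero real_sqrt_abs real_sqrt_le_mono le_add_same_cancel1 zero_le_power2)
  have L2: "L - 2 = b - 1 + r" and L2b: "L - 2 * b = 1 - b + r" by (simp_all add: L_def)
  have key: "(b - 1 + r) * (1 - b + r) = \<nu>^2"
  proof -
    have "(b - 1 + r) * (1 - b + r) = r^2 - (b-1)^2" by (simp add: algebra_simps power2_eq_square)
    thus ?thesis using r2 by simp
  qed
  have Lpos: "L > 0" using L2 rge bpos by linarith
  have Lm: "L * m = 4 * b - \<nu>^2"
  proof -
    have "L * m = (b+1)^2 - r^2" by (simp add: L_def m_def algebra_simps power2_eq_square)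
    thus ?thesis using r2 by (simp add: algebra_simps power2_eq_square)
  qed
  have Kpos: "4 * b - \<nu>^2 > 0" using hb by simp
  have mpos: "m > 0" using Lm Kpos Lpos by (metis zero_less_mult_pos)
  have m2: "2 - m = 1 - b + r" and m2b: "2 * b - m = b - 1 + r" by (simp_all add: m_def)
  have c1L: "c\<^sub>1 = 1 / L" unfolding c\<^sub>1_def L_def r_def b_def by simp
  have c2m: "c\<^sub>2 = 1 / m"
  proof -
    have "c\<^sub>2 = L / (4 * b - \<nu>^2)" unfolding c\<^sub>2_def L_def r_def b_def by simp
    also have "\<dots> = L / (L * m)" by (simp add: Lm)
    also have "\<dots> = 1 / m" using Lpos by simp
    finally show ?thesis .
  qed
  have c1pos: "c\<^sub>1 > 0" using c1L Lpos by simp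
  have c2pos: "c\<^sub>2 > 0" using c2m mpos by simp
  have p1: "1 - 2 * c\<^sub>1 \<ge> 0" and q1: "1 - 2 * c\<^sub>1 * b \<ge> 0" and s1: "(- (c\<^sub>1*\<nu>))^2 \<le> (1 - 2 * c\<^sub>1) * (1 - 2 * c\<^sub>1 * b)"
  proof -
    have "1 - 2 * c\<^sub>1 = (L - 2) / L" using Lpos by (simp add: c1L field_simps)
    thus "1 - 2 * c\<^sub>1 \<ge> 0" using L2 rge Lpos by (simp add: abs_le_iff)
    have "1 - 2 * c\<^sub>1 * b = (L - 2 * b) / L" using Lpos by (simp add: c1L field_simps)
    thus "1 - 2 * c\<^sub>1 * b \<ge> 0" using L2b rge Lpos by (simp add: abs_le_iff)
    have "(1 - 2 * c\<^sub>1) * (1 - 2 * c\<^sub>1 * b) = (L - 2) * (L - 2 * b) / L^2"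
      using Lpos by (simp add: c1L field_simps power2_eq_square)
    also have "\<dots> = \<nu>^2 / L^2" by (simp only: L2 L2b key)
    also have "\<dots> = (- (c\<^sub>1*\<nu>))^2" by (simp add: c1L power_divide)
    finally show "(- (c\<^sub>1*\<nu>))^2 \<le> (1 - 2 * c\<^sub>1) * (1 - 2 * c\<^sub>1 * b)" by simp
  qed
  have p2: "2 * c\<^sub>2 - 1 \<ge> 0" and q2: "2 * c\<^sub>2 * b - 1 \<ge> 0" and s2: "(c\<^sub>2*\<nu>)^2 \<le> (2 * c\<^sub>2 - 1) * (2 * c\<^sub>2 * b - 1)"
  proof -
    have "2 * c\<^sub>2 - 1 = (2 - m) / m" using mpos by (simp add: c2m field_simps)
    thus "2 * c\<^sub>2 - 1 \<ge> 0" using m2 rge mpos by (simp add: abs_le_iff)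
    have "2 * c\<^sub>2 * b - 1 = (2 * b - m) / m" using mpos by (simp add: c2m field_simps)
    thus "2 * c\<^sub>2 * b - 1 \<ge> 0" using m2b rge mpos by (simp add: abs_le_iff)
    have "(2 * c\<^sub>2 - 1) * (2 * c\<^sub>2 * b - 1) = (2 - m) * (2 * b - m) / m^2"
      using mpos by (simp add: c2m field_simps power2_eq_square)
    also have "\<dots> = \<nu>^2 / m^2" by (simp only: m2 m2b mult.commute[of "1 - b + r"] key)
    also have "\<dots> = (c\<^sub>2*\<nu>)^2" by (simp add: c2m power_divide)
    finally show "(c\<^sub>2*\<nu>)^2 \<le> (2 * c\<^sub>2 - 1) * (2 * c\<^sub>2 * b - 1)" by simp
  qed
  have main: "loewner_le (c\<^sub>1 *\<^sub>R P x) (block2 (mat 1) 0 0 (hessian V x + (1 - \<alpha>\<^sub>0) *\<^sub>R mat 1))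
       \<and> loewner_le (block2 (mat 1) 0 0 (hessian V x + (1 - \<alpha>\<^sub>0) *\<^sub>R mat 1)) (c\<^sub>2 *\<^sub>R P x)" for x
  proof
    let ?H = "hessian V x"
    have e1: "block2 (mat 1) 0 0 (?H + (1 - \<alpha>\<^sub>0) *\<^sub>R mat 1) - c\<^sub>1 *\<^sub>R P x
      = block2 ((1 - 2 * c\<^sub>1) *\<^sub>R mat 1) ((- (c\<^sub>1*\<nu>)) *\<^sub>R mat 1) ((- (c\<^sub>1*\<nu>)) *\<^sub>R mat 1)
          ((1 - 2 * c\<^sub>1) *\<^sub>R ?H + (1 - \<alpha>\<^sub>0 - 2 * c\<^sub>1 * a) *\<^sub>R mat 1)"
      unfolding P_def block2_scale block2_diff
      by (simp add: vec_eq_iff mat_def algebra_simps)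
    have e2: "c\<^sub>2 *\<^sub>R P x - block2 (mat 1) 0 0 (?H + (1 - \<alpha>\<^sub>0) *\<^sub>R mat 1)
      = block2 ((2 * c\<^sub>2 - 1) *\<^sub>R mat 1) ((c\<^sub>2*\<nu>) *\<^sub>R mat 1) ((c\<^sub>2*\<nu>) *\<^sub>R mat 1)
          ((2 * c\<^sub>2 - 1) *\<^sub>R ?H + (2 * c\<^sub>2 * a - 1 + \<alpha>\<^sub>0) *\<^sub>R mat 1)"
      unfolding P_def block2_scale block2_diff
      by (simp add: vec_eq_iff mat_def algebra_simps)
    show "loewner_le (c\<^sub>1 *\<^sub>R P x) (block2 (mat 1) 0 0 (?H + (1 - \<alpha>\<^sub>0) *\<^sub>R mat 1))"
      unfolding loewner_le_def psd_def e1 quad_expand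
    proof
      fix z :: "real^('n+'n)"
      define u where "u = (\<chi> i. z$Inl i)"
      define w where "w = (\<chi> i. z$Inr i)"
      have h: "(1 - 2 * c\<^sub>1) * (\<alpha>\<^sub>0 * (w \<bullet> w)) \<le> (1 - 2 * c\<^sub>1) * (w \<bullet> (?H *v w))"
        by (rule mult_left_mono[OF Hlb p1])
      have "0 \<le> (1 - 2 * c\<^sub>1) * (u \<bullet> u) + 2 * (- (c\<^sub>1*\<nu>)) * (u \<bullet> w) + (1 - 2 * c\<^sub>1 * b) * (w \<bullet> w)"
        by (rule quad2[OF p1 q1 s1])
      moreover have "(1 - 2 * c\<^sub>1 * b) * (w \<bullet> w) = (1 - \<alpha>\<^sub>0 - 2 * c\<^sub>1 * a) * (w \<bullet> w) + (1 - 2 * c\<^sub>1) * (\<alpha>\<^sub>0 * (w \<bullet> w))"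
        by (simp add: b_def algebra_simps)
      ultimately show "0 \<le> (1 - 2 * c\<^sub>1) * (u \<bullet> u) + 2 * (- (c\<^sub>1*\<nu>)) * (u \<bullet> w)
          + (1 - 2 * c\<^sub>1) * (w \<bullet> (?H *v w)) + (1 - \<alpha>\<^sub>0 - 2 * c\<^sub>1 * a) * (w \<bullet> w)"
        using h by linarith
    qed
    show "loewner_le (block2 (mat 1) 0 0 (?H + (1 - \<alpha>\<^sub>0) *\<^sub>R mat 1)) (c\<^sub>2 *\<^sub>R P x)"
      unfolding loewner_le_def psd_def e2 quad_expand
    proof
      fix z :: "real^('n+'n)"
      define u where "u = (\<chi> i. z$Inl i)"
      define w where "w = (\<chi> i. z$Inr i)"
      have h: "(2 * c\<^sub>2 - 1) * (\<alpha>\<^sub>0 * (w \<bullet> w)) \<le> (2 * c\<^sub>2 - 1) * (w \<bullet> (?H *v w))"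
        by (rule mult_left_mono[OF Hlb p2])
      have "0 \<le> (2 * c\<^sub>2 - 1) * (u \<bullet> u) + 2 * (c\<^sub>2*\<nu>) * (u \<bullet> w) + (2 * c\<^sub>2 * b - 1) * (w \<bullet> w)"
        by (rule quad2[OF p2 q2 s2])
      moreover have "(2 * c\<^sub>2 * b - 1) * (w \<bullet> w) = (2 * c\<^sub>2 * a - 1 + \<alpha>\<^sub>0) * (w \<bullet> w) + (2 * c\<^sub>2 - 1) * (\<alpha>\<^sub>0 * (w \<bullet> w))"
        by (simp add: b_def algebra_simps)
      ultimately show "0 \<le> (2 * c\<^sub>2 - 1) * (u \<bullet> u) + 2 * (c\<^sub>2*\<nu>) * (u \<bullet> w)
          + (2 * c\<^sub>2 - 1) * (w \<bullet> (?H *v w)) + (2 * c\<^sub>2 * a - 1 + \<alpha>\<^sub>0) * (w \<bullet> w)"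
        using h by linarith
    qed
  qed
  show ?thesis using c1pos c2pos main by blast
qed

end
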